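(* Let $(\eta_k)_{k\in\mathbb{N}}$ be independent identically distributed random variables with values in $\mathbb{N}$, $P(\eta_k=m)=p_m$ ($p_m\ge0$, $\sum_m p_m=1$), and let $$\eta=\sum_{k=1}^\infty\frac{(-1)^{k-1}}{\eta_1(\eta_1+\eta_2)\cdots(\eta_1+\eta_2+\dots+\eta_k)}.$$ Then the distribution $\mu_\eta$ of $\eta$ is invariant and ergodic with respect to the shift $T$.
   Context: Every irrational $x\in(0,1)$ has a unique representation ($\bar O^1$-expansion) $$x=\sum_{k=1}^\infty\frac{(-1)^{k-1}}{g_1(g_1+g_2)\cdots(g_1+g_2+\dots+g_k)}=:\bar O^1(g_1,g_2,\dots),\qquad g_k\in\mathbb{N},$$ and every infinite sequence of positive integers yields an irrational number in $(0,1)$ this way; so $\eta=\bar O^1(\eta_1,\eta_2,\dots)$. The shift $T$ is defined on irrationals of $(0,1)$ by $T(\bar O^1(g_1,g_2,g_3,\dots))=\bar O^1(g_2,g_3,\dots)$. A measure $\mu$ is $T$-invariant if $\mu(T^{-1}E)=\mu(E)$ for every Borel set $E$; it is $T$-ergodic if every Borel set $A$ with $T^{-1}A=A$ has $\mu(A)\in\{0,1\}$. *)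

theory Defs
  imports "HOL-Probability.Probability"
begin

text \<open>The alternating Ostrogradsky-type series; digits indexed from 0:
  obar g = sum_{k>=0} (-1)^k / (g0 (g0+g1) ... (g0+...+gk)).\<close>
definition obar :: "(nat \<Rightarrow> nat) \<Rightarrow> real" where
  "obar g = (\<Sum>k. (-1)^k / (\<Prod>j\<le>k. real (\<Sum>i\<le>j. g i)))"

definition irr01 :: "real set" where
  "irr01 = {x. 0 < x \<and> x < 1 \<and> x \<notin> \<rat>}"

definition odigits :: "real \<Rightarrow> nat \<Rightarrow> nat" where
  "odigits x = (THE g. (\<forall>k. 1 \<le> g k) \<and> obar g = x)"

definition oshift :: "real \<Rightarrow> real" where
  "oshift x = obar (\<lambda>k. odigits x (Suc k))"

end

theory Submission
  imports Defs
begin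

definition F :: "nat \<Rightarrow> (nat \<Rightarrow> nat) \<Rightarrow> real" where
  "F s g = (\<Sum>k. (-1)^k / (\<Prod>j\<le>k. real (s + (\<Sum>i\<le>j. g i))))"

definition aa :: "nat \<Rightarrow> (nat \<Rightarrow> nat) \<Rightarrow> nat \<Rightarrow> real" where
  "aa s g k = 1 / (\<Prod>j\<le>k. real (s + (\<Sum>i\<le>j. g i)))"

lemma obar_F: "obar g = F 0 g"
  by (simp add: obar_def F_def)

lemma factor_ge: assumes "\<forall>i. 1 \<le> g i" shows "real (Suc j) \<le> real (s + (\<Sum>i\<le>j. g i))"
proof -
  have "(\<Sum>i\<le>j. (1::nat)) \<le> (\<Sum>i\<le>j. g i)" by (rule sum_mono) (use assms in auto)
  then have "Suc j \<le> s + (\<Sum>i\<le>j. g i)" by simp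
  then show ?thesis by (simp only: of_nat_le_iff)
qed

lemma prod_ge: assumes "\<forall>i. 1 \<le> g i" shows "real (Suc k) \<le> (\<Prod>j\<le>k. real (s + (\<Sum>i\<le>j. g i)))"
proof (induction k)
  case 0 then show ?case using factor_ge[OF assms, of 0 s] by simp
next
  case (Suc k)
  have f: "real (Suc (Suc k)) \<le> real (s + (\<Sum>i\<le>Suc k. g i))" by (rule factor_ge[OF assms])
  have "real (Suc (Suc k)) \<le> 1 * real (s + (\<Sum>i\<le>Suc k. g i))" using f by simp
  also have "\<dots> \<le> (\<Prod>j\<le>k. real (s + (\<Sum>i\<le>j. g i))) * real (s + (\<Sum>i\<le>Suc k. g i))"
    by (rule mult_right_mono) (use Suc in \<open>auto simp: sum_nonneg\<close>)
  finally show ?case by (simp add: atMost_Suc mult.commute)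
qed

lemma aa_props: assumes "\<forall>i. 1 \<le> g i"
  shows "aa s g \<longlonglongrightarrow> 0" "\<And>n. 0 \<le> aa s g n" "\<And>n. aa s g (Suc n) \<le> aa s g n"
proof -
  have P: "\<And>k. real (Suc k) \<le> (\<Prod>j\<le>k. real (s + (\<Sum>i\<le>j. g i)))" by (rule prod_ge[OF assms])
  show "\<And>n. 0 \<le> aa s g n"
  proof -
    fix n
    have "0 < real (Suc n)" by simp
    then have "0 < (\<Prod>j\<le>n. real (s + (\<Sum>i\<le>j. g i)))" using P[of n] by linarith
    then show "0 \<le> aa s g n" unfolding aa_def by simp
  qed
  show "\<And>n. aa s g (Suc n) \<le> aa s g n"
  proof -
    fix n
    have f: "1 \<le> real (s + (\<Sum>i\<le>Suc n. g i))" using factor_ge[OF assms, of "Suc n" s] by simp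
    have p: "1 \<le> (\<Prod>j\<le>n. real (s + (\<Sum>i\<le>j. g i)))" using P[of n] by simp
    have "(\<Prod>j\<le>n. real (s + (\<Sum>i\<le>j. g i))) \<le> (\<Prod>j\<le>n. real (s + (\<Sum>i\<le>j. g i))) * real (s + (\<Sum>i\<le>Suc n. g i))"
      using f p by (simp add: mult_le_cancel_left1)
    then show "aa s g (Suc n) \<le> aa s g n" unfolding aa_def using p
      by (simp add: atMost_Suc frac_le)
  qed
  show "aa s g \<longlonglongrightarrow> 0"
  proof (rule Lim_null_comparison[OF _ LIMSEQ_inverse_real_of_nat])
    show "\<forall>\<^sub>F n in sequentially. norm (aa s g n) \<le> inverse (real (Suc n))"
    proof (intro always_eventually allI)
      fix n
      have "0 < real (Suc n)" by simp
      then show "norm (aa s g n) \<le> inverse (real (Suc n))" unfolding aa_def using P[of n]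
        by (simp add: divide_simps)
    qed
  qed
qed

lemma F_aa: "F s g = (\<Sum>k. (-1)^k * aa s g k)"
  by (simp add: F_def aa_def)

lemma F_summable: assumes "\<forall>i. 1 \<le> g i" shows "summable (\<lambda>k. (-1)^k * aa s g k)"
  using summable_Leibniz'(1)[OF aa_props[OF assms]] .

lemma F_bounds: assumes "\<forall>i. 1 \<le> g i"
  shows "0 \<le> F s g" "F s g \<le> 1 / real (s + g 0)"
proof -
  note L = summable_Leibniz'[OF aa_props[OF assms, of s]]
  have "(\<Sum>i<2*1. (-1)^i * aa s g i) \<le> F s g" using L(2)[of 1] by (simp add: F_aa)
  moreover have "(\<Sum>i<2*1. (-1)^i * aa s g i) = aa s g 0 - aa s g 1" by (simp add: numeral_2_eq_2)
  moreover have "aa s g 1 \<le> aa s g 0" using aa_props(3)[OF assms, of s 0] by simp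
  ultimately show "0 \<le> F s g" by simp
  have "F s g \<le> (\<Sum>i<2*0+1. (-1)^i * aa s g i)" using L(4)[of 0] by (simp add: F_aa)
  then show "F s g \<le> 1 / real (s + g 0)" by (simp add: aa_def)
qed

lemma aa_Suc: "aa s g (Suc k) = aa (s + g 0) (\<lambda>i. g (Suc i)) k / real (s + g 0)"
proof -
  have e: "\<And>j. s + (\<Sum>i\<le>Suc j. g i) = (s + g 0) + (\<Sum>i\<le>j. g (Suc i))"
    by (subst sum.atMost_Suc_shift) simp
  have "(\<Prod>j\<le>Suc k. real (s + (\<Sum>i\<le>j. g i))) = real (s + g 0) * (\<Prod>j\<le>k. real (s + (\<Sum>i\<le>Suc j. g i)))"
    by (subst prod.atMost_Suc_shift) simp
  also have "\<dots> = real (s + g 0) * (\<Prod>j\<le>k. real ((s + g 0) + (\<Sum>i\<le>j. g (Suc i))))"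
    by (simp only: e)
  finally show ?thesis unfolding aa_def by (simp add: field_simps)
qed

lemma F_rec: assumes "\<forall>i. 1 \<le> g i"
  shows "F s g = (1 - F (s + g 0) (\<lambda>i. g (Suc i))) / real (s + g 0)"
proof -
  have g': "\<forall>i. 1 \<le> (\<lambda>i. g (Suc i)) i" using assms by simp
  let ?t = "\<lambda>k. (-1)^k * aa s g k"
  let ?u = "\<lambda>k. (-1)^k * aa (s + g 0) (\<lambda>i. g (Suc i)) k"
  have "F s g = ?t 0 + (\<Sum>k. ?t (Suc k))"
    using suminf_split_head[OF F_summable[OF assms, of s]] unfolding F_aa by simp
  also have "?t 0 = 1 / real (s + g 0)" by (simp add: aa_def)
  also have "(\<lambda>k. ?t (Suc k)) = (\<lambda>k. (- 1 / real (s + g 0)) * ?u k)"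
    by (rule ext) (simp add: aa_Suc)
  also have "(\<Sum>k. (- 1 / real (s + g 0)) * ?u k) = (- 1 / real (s + g 0)) * F (s + g 0) (\<lambda>i. g (Suc i))"
    unfolding F_aa[of "s + g 0"] by (rule suminf_mult[OF F_summable[OF g']])
  finally show ?thesis by (simp add: diff_divide_distrib)
qed

lemma F_pos: assumes "\<forall>i. 1 \<le> g i" shows "0 < F s g"
proof -
  let ?h = "\<lambda>i. g (Suc i)"
  have g': "\<forall>i. 1 \<le> ?h i" using assms by simp
  have n1: "1 \<le> real (s + g 0)" using assms by (simp add: add_increasing)
  have r: "F s g = (1 - F (s + g 0) ?h) / real (s + g 0)" by (rule F_rec[OF assms])
  have b: "F (s + g 0) ?h \<le> 1 / real (s + g 0 + ?h 0)" by (rule F_bounds(2)[OF g'])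
  have "2 \<le> s + g 0 + ?h 0" using assms n1
    by (metis add_mono le_add2 one_add_one order_trans)
  then have "2 \<le> real (s + g 0 + ?h 0)" by linarith
  then have "1 / real (s + g 0 + ?h 0) < 1" by simp
  then have "F (s + g 0) ?h < 1" using b by linarith
  then show ?thesis using r n1 by simp
qed

lemma F_less: assumes "\<forall>i. 1 \<le> g i" shows "F s g < 1 / real (s + g 0)"
proof -
  let ?h = "\<lambda>i. g (Suc i)"
  have g': "\<forall>i. 1 \<le> ?h i" using assms by simp
  have n1: "1 \<le> real (s + g 0)" using assms by (simp add: add_increasing)
  have r: "F s g = (1 - F (s + g 0) ?h) / real (s + g 0)" by (rule F_rec[OF assms])
  have "0 < F (s + g 0) ?h" by (rule F_pos[OF g'])
  then have "(1 - F (s + g 0) ?h) / real (s + g 0) < 1 / real (s + g 0)"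
    using n1 by (intro divide_strict_right_mono) auto
  then show ?thesis using r by linarith
qed

lemma F_gt: assumes "\<forall>i. 1 \<le> g i" shows "1 / real (s + g 0 + 1) < F s g"
proof -
  let ?h = "\<lambda>i. g (Suc i)"
  have g': "\<forall>i. 1 \<le> ?h i" using assms by simp
  have n1: "1 \<le> real (s + g 0)" using assms by (simp add: add_increasing)
  have r: "F s g = (1 - F (s + g 0) ?h) / real (s + g 0)" by (rule F_rec[OF assms])
  have "F (s + g 0) ?h < 1 / real (s + g 0 + ?h 0)" by (rule F_less[OF g'])
  also have "\<dots> \<le> 1 / real (s + g 0 + 1)" using assms n1 by (intro divide_left_mono) auto
  finally have l: "F (s + g 0) ?h < 1 / real (s + g 0 + 1)" .
  have aux: "1/real (m+1) = (1 - 1/real (m+1))/real m" if "1 \<le> real m" for m :: nat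
  proof -
    have "0 < real m" using that by simp
    then have "0 < real m + real m * real m" by (simp add: add_pos_pos)
    then show ?thesis using \<open>0 < real m\<close> by (simp add: field_simps)
  qed
  have "1 / real (s + g 0 + 1) = (1 - 1 / real (s + g 0 + 1)) / real (s + g 0)"
    by (rule aux[OF n1])
  also have "\<dots> < (1 - F (s + g 0) ?h) / real (s + g 0)"
    using l n1 by (intro divide_strict_right_mono) auto
  finally show ?thesis using r by simp
qed

lemma interval_unique:
  assumes "1 \<le> m" "1 \<le> n" "1 / real (m + 1) < x" "x < 1 / real m"
    "1 / real (n + 1) < x" "x < 1 / real n"
  shows "m = n"
proof (rule ccontr)
  assume "m \<noteq> n"
  then consider "m < n" | "n < m" by linarith
  then show False
  proof cases
    case 1
    then have "real (m + 1) \<le> real n" by simp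
    then have "1 / real n \<le> 1 / real (m + 1)" by (intro divide_left_mono) auto
    then show False using assms by linarith
  next
    case 2
    then have "real (n + 1) \<le> real m" by simp
    then have "1 / real m \<le> 1 / real (n + 1)" by (intro divide_left_mono) auto
    then show False using assms by linarith
  qed
qed

lemma F_step_unique:
  assumes g: "\<forall>i. 1 \<le> g i" and h: "\<forall>i. 1 \<le> h i" and e: "F s g = F s h"
  shows "g 0 = h 0 \<and> F (s + g 0) (\<lambda>i. g (Suc i)) = F (s + h 0) (\<lambda>i. h (Suc i))"
proof -
  have "s + g 0 = s + h 0"
    apply (rule interval_unique[of _ _ "F s g"])
    using F_gt[OF g, of s] F_less[OF g, of s] F_gt[OF h, of s] F_less[OF h, of s] g h e
    by (auto simp: add_increasing)
  then have 0: "g 0 = h 0" by simp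
  have "1 \<le> g 0" using g by simp
  then have "0 < s + g 0" by simp
  then have n: "0 < real (s + g 0)" by (simp only: of_nat_0_less_iff)
  have aux: "a = b" if "0 < (m::real)" "(1 - a) / m = (1 - b) / m" for m a b
    using that by (simp add: divide_cancel_right)
  have eq: "(1 - F (s + g 0) (\<lambda>i. g (Suc i))) / real (s + g 0) = (1 - F (s + h 0) (\<lambda>i. h (Suc i))) / real (s + h 0)"
    using F_rec[OF g, of s] F_rec[OF h, of s] e by metis
  have "(1 - F (s + h 0) (\<lambda>i. g (Suc i))) / real (s + h 0) = (1 - F (s + h 0) (\<lambda>i. h (Suc i))) / real (s + h 0)"
    using eq unfolding 0 .
  moreover have "0 < real (s + h 0)" using n unfolding 0 .
  ultimately have "F (s + h 0) (\<lambda>i. g (Suc i)) = F (s + h 0) (\<lambda>i. h (Suc i))" using aux by blast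
  with 0 show ?thesis by simp
qed

lemma F_unique:
  assumes "\<forall>i. 1 \<le> g i" "\<forall>i. 1 \<le> h i" "F s g = F s h"
  shows "g n = h n"
  using assms
proof (induction n arbitrary: s g h)
  case 0 then show ?case using F_step_unique by blast
next
  case (Suc n)
  from F_step_unique[OF Suc.prems] have
    "g 0 = h 0" "F (s + g 0) (\<lambda>i. g (Suc i)) = F (s + g 0) (\<lambda>i. h (Suc i))" by auto
  from Suc.IH[OF _ _ this(2)] Suc.prems show ?case by simp
qed

lemma obar_inj: assumes "\<forall>i. 1 \<le> g i" "\<forall>i. 1 \<le> h i" "obar g = obar h" shows "g = h"
  using F_unique[of g h 0] assms by (auto simp: obar_F)

definition tt :: "(nat \<Rightarrow> nat) \<Rightarrow> nat \<Rightarrow> real" where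
  "tt g n = F (\<Sum>i<n. g i) (\<lambda>k. g (k + n))"

lemma tt_0: "tt g 0 = obar g" by (simp add: tt_def obar_F)

lemma psum_ge: assumes "\<forall>i. 1 \<le> g i" shows "Suc n \<le> (\<Sum>i<Suc n. g i)"
proof -
  have "(\<Sum>i<Suc n. (1::nat)) \<le> (\<Sum>i<Suc n. g i)" by (rule sum_mono) (use assms in auto)
  then show ?thesis by simp
qed

lemma one_div_mono: "0 < (a::real) \<Longrightarrow> a \<le> c \<Longrightarrow> 1 / c \<le> 1 / a"
  by (rule frac_le) auto

lemma psum_ge_real: assumes "\<forall>i. 1 \<le> g i" shows "real (Suc n) \<le> real (\<Sum>i<Suc n. g i)"
  using psum_ge[OF assms, of n] by (simp only: of_nat_le_iff)

lemma tt_rec: assumes "\<forall>i. 1 \<le> g i"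
  shows "tt g (Suc n) = 1 - real (\<Sum>i<Suc n. g i) * tt g n"
proof -
  have g': "\<forall>i. 1 \<le> (\<lambda>k. g (k + n)) i" using assms by simp
  have r: "tt g n = (1 - F ((\<Sum>i<n. g i) + g n) (\<lambda>i. g (Suc i + n))) / real ((\<Sum>i<n. g i) + g n)"
    unfolding tt_def using F_rec[OF g', of "\<Sum>i<n. g i"] by simp
  have e1: "(\<Sum>i<n. g i) + g n = (\<Sum>i<Suc n. g i)" by simp
  have e2: "(\<lambda>i. g (Suc i + n)) = (\<lambda>k. g (k + Suc n))" by simp
  have p: "0 < real (\<Sum>i<Suc n. g i)" using psum_ge[OF assms, of n] by linarith
  have "tt g n = (1 - tt g (Suc n)) / real (\<Sum>i<Suc n. g i)"
    using r unfolding e1 e2 tt_def by simp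
  then show ?thesis using p by (simp add: field_simps)
qed

lemma tt_bounds: assumes "\<forall>i. 1 \<le> g i"
  shows "0 < tt g n" "tt g n < 1 / real (\<Sum>i<Suc n. g i)"
proof -
  have g': "\<forall>i. 1 \<le> (\<lambda>k. g (k + n)) i" using assms by simp
  show "0 < tt g n" unfolding tt_def by (rule F_pos[OF g'])
  show "tt g n < 1 / real (\<Sum>i<Suc n. g i)" unfolding tt_def using F_less[OF g', of "\<Sum>i<n. g i"] by simp
qed

lemma obar_irrational: assumes "\<forall>i. 1 \<le> g i" shows "obar g \<notin> \<rat>"
proof
  assume "obar g \<in> \<rat>"
  then obtain a b :: int where b: "b > 0" and ab: "obar g = of_int a / of_int b"
    by (auto elim: Rats_cases')
  have int: "\<exists>z::int. real_of_int b * tt g n = of_int z" for n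
  proof (induction n)
    case 0 then show ?case using b ab by (simp add: tt_0)
  next
    case (Suc n)
    then obtain z where z: "real_of_int b * tt g n = of_int z" by blast
    have "real_of_int b * tt g (Suc n) = real_of_int b - real (\<Sum>i<Suc n. g i) * (real_of_int b * tt g n)"
      unfolding tt_rec[OF assms] by (simp only: algebra_simps)
    also have "\<dots> = of_int (b - int (\<Sum>i<Suc n. g i) * z)" unfolding z by simp
    finally have "real_of_int b * tt g (Suc n) = of_int (b - int (\<Sum>i<Suc n. g i) * z)" .
    then show ?case by blast
  qed
  define n where "n = nat b"
  obtain z where z: "real_of_int b * tt g n = of_int z" using int by blast
  have "0 < real_of_int b * tt g n" using b tt_bounds(1)[OF assms] by simp
  then have z0: "0 < z" using z by simp
  have "real_of_int b * tt g n < real_of_int b * (1 / real (\<Sum>i<Suc n. g i))"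
    using b by (intro mult_strict_left_mono tt_bounds(2)[OF assms]) simp_all
  also have "\<dots> \<le> real_of_int b * (1 / real (Suc n))"
    using b by (intro mult_left_mono one_div_mono psum_ge_real[OF assms]) simp_all
  also have "\<dots> < 1" using b by (simp add: n_def field_simps)
  finally have "z < 1" using z by simp
  with z0 show False by simp
qed

lemma obar_irr01: assumes "\<forall>i. 1 \<le> g i" shows "obar g \<in> irr01"
proof -
  have "0 < obar g" unfolding obar_F by (rule F_pos[OF assms])
  moreover have "obar g < 1"
  proof -
    have "F 0 g < 1 / real (0 + g 0)" by (rule F_less[OF assms])
    then have "obar g < 1 / real (0 + g 0)" by (simp only: obar_F)
    also have "\<dots> \<le> 1 / 1"
    proof (rule one_div_mono)
      have "1 \<le> g 0" using assms by simp
      then show "1 \<le> real (0 + g 0)" by simp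
    qed simp
    also have "(1::real) / 1 = 1" by simp
    finally show ?thesis .
  qed
  ultimately show ?thesis using obar_irrational[OF assms] by (simp add: irr01_def)
qed

lemma odigits_obar: assumes "\<forall>i. 1 \<le> g i" shows "odigits (obar g) = g"
  unfolding odigits_def
  by (rule the_equality) (use assms obar_inj in auto)

lemma oshift_obar: assumes "\<forall>i. 1 \<le> g i" shows "oshift (obar g) = obar (\<lambda>k. g (Suc k))"
  by (simp add: oshift_def odigits_obar[OF assms])

fun tx :: "real \<Rightarrow> nat \<Rightarrow> real" where
  "tx x 0 = x"
| "tx x (Suc n) = 1 - of_int \<lfloor>1 / tx x n\<rfloor> * tx x n"

definition sx :: "real \<Rightarrow> nat \<Rightarrow> nat" where
  "sx x n = nat \<lfloor>1 / tx x n\<rfloor>"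

fun dg :: "real \<Rightarrow> nat \<Rightarrow> nat" where
  "dg x 0 = sx x 0"
| "dg x (Suc n) = sx x (Suc n) - sx x n"

lemma step_facts:
  fixes t :: real
  assumes t: "t \<notin> \<rat>" "0 < t" "t < 1"
  shows "1 \<le> \<lfloor>1/t\<rfloor>" "of_int \<lfloor>1/t\<rfloor> < 1/t" "1/t < of_int \<lfloor>1/t\<rfloor> + 1"
    "1 - of_int \<lfloor>1/t\<rfloor> * t \<notin> \<rat>" "0 < 1 - of_int \<lfloor>1/t\<rfloor> * t"
    "1 - of_int \<lfloor>1/t\<rfloor> * t < 1 / (of_int \<lfloor>1/t\<rfloor> + 1)"
    "1 - of_int \<lfloor>1/t\<rfloor> * t < 1"
proof -
  have ir: "1/t \<notin> \<rat>"
  proof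
    assume "1/t \<in> \<rat>" then have "inverse (1/t) \<in> \<rat>" by (rule Rats_inverse)
    then show False using t by simp
  qed
  have gt1: "1 < 1/t" using t by simp
  show f1: "1 \<le> \<lfloor>1/t\<rfloor>" using gt1 by (simp add: le_floor_iff)
  have "of_int \<lfloor>1/t\<rfloor> \<noteq> 1/t" using ir by (metis Rats_of_int)
  then show f2: "of_int \<lfloor>1/t\<rfloor> < 1/t" by (simp add: order_le_neq_trans)
  show f3: "1/t < of_int \<lfloor>1/t\<rfloor> + 1" by linarith
  let ?s = "of_int \<lfloor>1/t\<rfloor> :: real"
  have s1: "1 \<le> ?s" using f1 by simp
  show "1 - ?s * t \<notin> \<rat>"
  proof
    assume "1 - ?s * t \<in> \<rat>"
    then have "1 - (1 - ?s * t) \<in> \<rat>" by (rule Rats_diff[OF Rats_1])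
    then have st: "?s * t \<in> \<rat>" by simp
    have "inverse ?s * (?s * t) \<in> \<rat>" by (intro Rats_mult Rats_inverse Rats_of_int st)
    moreover have "inverse ?s * (?s * t) = t"
    proof -
      have aux: "(a::real) \<noteq> 0 \<Longrightarrow> inverse a * (a * b) = b" for a b by simp
      have "?s \<noteq> 0" using s1 by linarith
      then show ?thesis by (rule aux)
    qed
    ultimately show False using t(1) by simp
  qed
  have "?s * t < 1" using f2 t by (simp add: field_simps)
  then show "0 < 1 - ?s * t" by simp
  have "1 < (?s + 1) * t" using f3 t by (simp add: field_simps)
  moreover have aux: "1 - a * b < 1 / (a + 1)" if "1 \<le> (a::real)" "1 < (a + 1) * b" for a b
  proof -
    have "a * 1 < a * ((a + 1) * b)" using that by (intro mult_strict_left_mono) auto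
    then have "(1 - a * b) * (a + 1) < 1" by (simp add: algebra_simps)
    moreover have "0 < a + 1" using that by simp
    ultimately show ?thesis by (simp add: less_divide_eq)
  qed
  ultimately show "1 - ?s * t < 1 / (?s + 1)" using s1 by blast
  show "1 - ?s * t < 1" using s1 t by simp
qed

lemma tx_inv:
  assumes x: "x \<in> irr01"
  shows "tx x n \<notin> \<rat> \<and> 0 < tx x n \<and> tx x n < 1 \<and> (\<forall>m. n = Suc m \<longrightarrow> tx x n < 1 / (real (sx x m) + 1))"
proof (induction n)
  case 0 then show ?case using x by (simp add: irr01_def)
next
  case (Suc n)
  then have t: "tx x n \<notin> \<rat>" "0 < tx x n" "tx x n < 1" by auto
  note S = step_facts[OF t]
  have "real (sx x n) = of_int \<lfloor>1 / tx x n\<rfloor>" unfolding sx_def by (rule of_nat_nat) (use S(1) in linarith)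
  then show ?case using S by simp
qed

lemma sx_ge1: assumes "x \<in> irr01" shows "1 \<le> sx x n"
proof -
  have t: "tx x n \<notin> \<rat>" "0 < tx x n" "tx x n < 1" using tx_inv[OF assms] by auto
  have "nat 1 \<le> nat \<lfloor>1 / tx x n\<rfloor>" by (rule nat_mono[OF step_facts(1)[OF t]])
  then show ?thesis unfolding sx_def nat_1 by (simp only: One_nat_def)
qed

lemma real_sx: assumes "x \<in> irr01" shows "real (sx x n) = of_int \<lfloor>1 / tx x n\<rfloor>"
proof -
  have t: "tx x n \<notin> \<rat>" "0 < tx x n" "tx x n < 1" using tx_inv[OF assms] by auto
  have "1 \<le> \<lfloor>1 / tx x n\<rfloor>" by (rule step_facts(1)[OF t])
  show ?thesis unfolding sx_def by (rule of_nat_nat) (use \<open>1 \<le> \<lfloor>1 / tx x n\<rfloor>\<close> in linarith)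
qed

lemma sx_mono: assumes x: "x \<in> irr01" shows "sx x n < sx x (Suc n)"
proof -
  note inv = tx_inv[OF x, of "Suc n"]
  have t: "tx x (Suc n) \<notin> \<rat>" "0 < tx x (Suc n)" "tx x (Suc n) < 1" using inv by blast+
  have l: "tx x (Suc n) < 1 / (real (sx x n) + 1)" using inv by blast
  have p: "0 < real (sx x n) + 1" by simp
  have "tx x (Suc n) * (real (sx x n) + 1) < 1" using l p by (simp add: less_divide_eq)
  then have "real (sx x n) + 1 < 1 / tx x (Suc n)" using t(2) by (simp add: less_divide_eq mult.commute)
  then have "of_int (int (sx x n) + 1) \<le> 1 / tx x (Suc n)" by simp
  then have "int (sx x n) + 1 \<le> \<lfloor>1 / tx x (Suc n)\<rfloor>" by (simp only: le_floor_iff)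
  then have "real_of_int (int (sx x n) + 1) \<le> of_int \<lfloor>1 / tx x (Suc n)\<rfloor>" by (simp only: of_int_le_iff)
  then have "real (sx x n) + 1 \<le> real (sx x (Suc n))" using real_sx[OF x, of "Suc n"] by simp
  then show ?thesis by simp
qed

lemma dg_ge1: assumes x: "x \<in> irr01" shows "\<forall>i. 1 \<le> dg x i"
proof
  fix i show "1 \<le> dg x i"
  proof (cases i)
    case 0 then show ?thesis using sx_ge1[OF x, of 0] by simp
  next
    case (Suc m) then show ?thesis using sx_mono[OF x, of m] by simp
  qed
qed

lemma dg_sum: assumes x: "x \<in> irr01" shows "(\<Sum>i<Suc n. dg x i) = sx x n"
proof (induction n)
  case 0 then show ?case by simp
next
  case (Suc n)
  have "(\<Sum>i<Suc (Suc n). dg x i) = sx x n + dg x (Suc n)" using Suc by simp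
  also have "\<dots> = sx x (Suc n)" using sx_mono[OF x, of n] by simp
  finally show ?case .
qed

lemma obar_dg: assumes x: "x \<in> irr01" shows "obar (dg x) = x"
proof -
  let ?g = "dg x"
  have g: "\<forall>i. 1 \<le> ?g i" by (rule dg_ge1[OF x])
  define e where "e n = tt ?g n - tx x n" for n
  have S: "real (\<Sum>i<Suc n. ?g i) = of_int \<lfloor>1 / tx x n\<rfloor>" for n
    using dg_sum[OF x, of n] real_sx[OF x, of n] by simp
  have erec: "e (Suc n) = - real (sx x n) * e n" for n
    unfolding e_def tt_rec[OF g] using S[of n] real_sx[OF x, of n] by (simp add: algebra_simps)
  have eabs: "\<bar>e 0\<bar> \<le> \<bar>e n\<bar>" for n
  proof (induction n)
    case (Suc n)
    have "\<bar>e (Suc n)\<bar> = real (sx x n) * \<bar>e n\<bar>" using erec[of n] by (simp add: abs_mult)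
    moreover have "\<bar>e n\<bar> \<le> real (sx x n) * \<bar>e n\<bar>" using sx_ge1[OF x, of n]
      by (simp add: mult_le_cancel_right1)
    ultimately show ?case using Suc by linarith
  qed simp
  have ebound: "\<bar>e n\<bar> < 1 / real (Suc n)" for n
  proof -
    have t: "tx x n \<notin> \<rat>" "0 < tx x n" "tx x n < 1" using tx_inv[OF x] by auto
    note F = step_facts[OF t]
    let ?S = "real (sx x n)"
    have S1: "1 \<le> ?S" using sx_ge1[OF x] by simp
    have a1: "0 < tt ?g n" by (rule tt_bounds(1)[OF g])
    have "tt ?g n < 1 / real (\<Sum>i<Suc n. ?g i)" by (rule tt_bounds(2)[OF g])
    then have a2: "tt ?g n < 1 / ?S" unfolding dg_sum[OF x] .
    have S2: "?S < 1 / tx x n" unfolding real_sx[OF x] by (rule F(2))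
    have aux2: "t' < 1 / S" if "0 < t'" "1 \<le> S" "S < 1 / t'" for t' S :: real
    proof -
      have "S * t' < 1" using that by (simp add: less_divide_eq)
      then show ?thesis using that by (simp add: less_divide_eq mult.commute)
    qed
    have b1: "tx x n < 1 / ?S" using aux2[OF t(2) S1 S2] .
    have "\<bar>e n\<bar> < 1 / ?S" unfolding e_def using a1 a2 b1 t by linarith
    also have "1 / ?S \<le> 1 / real (Suc n)"
    proof (rule one_div_mono)
      show "real (Suc n) \<le> ?S" using psum_ge_real[OF g, of n] unfolding dg_sum[OF x] .
    qed simp
    finally show ?thesis .
  qed
  have "e 0 = 0"
  proof (rule ccontr)
    assume "e 0 \<noteq> 0"
    then have "0 < \<bar>e 0\<bar>" by simp
    then obtain n where "inverse (real (Suc n)) < \<bar>e 0\<bar>" using reals_Archimedean by blast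
    then show False using eabs[of n] ebound[of n] by (simp add: inverse_eq_divide)
  qed
  then show ?thesis unfolding e_def by (simp add: tt_0)
qed

lemma odigits_irr: assumes x: "x \<in> irr01" shows "odigits x = dg x"
  using odigits_obar[OF dg_ge1[OF x]] obar_dg[OF x] by simp

lemma oshift_irr: assumes x: "x \<in> irr01" shows "oshift x = obar (\<lambda>k. dg x (Suc k))"
  unfolding oshift_def odigits_irr[OF x] ..

lemma obar_measurable:
  assumes ge: "\<And>k x. x \<in> space N \<Longrightarrow> 1 \<le> f k x"
    and meas[measurable]: "\<And>k. (\<lambda>x. real (f k x)) \<in> borel_measurable N"
  shows "(\<lambda>x. obar (\<lambda>k. f k x)) \<in> borel_measurable N"
proof (rule borel_measurable_LIMSEQ_real)
  fix x assume x: "x \<in> space N"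
  have g: "\<forall>i. 1 \<le> (\<lambda>k. f k x) i" using ge[OF x] by simp
  show "(\<lambda>n. \<Sum>k<n. (-1)^k * aa 0 (\<lambda>k. f k x) k) \<longlonglongrightarrow> obar (\<lambda>k. f k x)"
    unfolding obar_F F_aa using summable_LIMSEQ[OF F_summable[OF g]] .
next
  fix n
  have e: "(\<lambda>x. \<Sum>k<n. (-1)^k * aa 0 (\<lambda>k. f k x) k) =
        (\<lambda>x. \<Sum>k<n. (-1)^k * (1 / (\<Prod>j\<le>k. (\<Sum>i\<le>j. real (f i x)))))"
    by (simp add: aa_def)
  show "(\<lambda>x. \<Sum>k<n. (-1)^k * aa 0 (\<lambda>k. f k x) k) \<in> borel_measurable N"
    unfolding e by measurable
qed

lemma tx_measurable[measurable]: "(\<lambda>x. tx x n) \<in> borel_measurable borel"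
proof (induction n)
  case 0 then show ?case by simp
next
  case (Suc n)
  have f: "(\<lambda>x. real_of_int \<lfloor>1 / tx x n\<rfloor>) \<in> borel_measurable borel"
    using measurable_compose[OF _ borel_measurable_real_floor, of "\<lambda>x. 1 / tx x n" borel] Suc by simp
  show ?case using f Suc by simp
qed

lemma real_nat_floor: "real (nat z) = max 0 (real_of_int z)"
  by (cases "0 \<le> z") auto

lemma real_nat_diff: "real (a - b) = max 0 (real a - real b)"
  by (cases "b \<le> a") (auto simp: of_nat_diff)

lemma sx_measurable[measurable]: "(\<lambda>x. real (sx x n)) \<in> borel_measurable borel"
proof -
  have f: "(\<lambda>x. real_of_int \<lfloor>1 / tx x n\<rfloor>) \<in> borel_measurable borel"
    using measurable_compose[OF _ borel_measurable_real_floor, of "\<lambda>x. 1 / tx x n" borel] by simp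
  show ?thesis unfolding sx_def real_nat_floor using f by simp
qed

lemma dg_measurable[measurable]: "(\<lambda>x. real (dg x n)) \<in> borel_measurable borel"
  by (cases n) (simp_all add: real_nat_diff)

definition Phi :: "(nat \<Rightarrow> nat) \<Rightarrow> real" where
  "Phi g = obar (\<lambda>k. max 1 (g k))"

lemma irr01_borel: "irr01 \<in> sets borel"
proof -
  have q: "\<rat> \<in> sets (borel :: real measure)"
    by (rule sets.countable) (auto simp: countable_rat)
  have e: "irr01 = {0<..<1} - \<rat>" by (auto simp: irr01_def)
  have "{0<..<1::real} \<in> sets borel" by (rule borel_open) simp
  then show ?thesis unfolding e using q by (rule sets.Diff)
qed

lemma preimage_borel:
  assumes E: "E \<in> sets borel"
  shows "{x \<in> irr01. oshift x \<in> E} \<in> sets borel"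
proof -
  have m: "(\<lambda>x. obar (\<lambda>k. max 1 (dg x (Suc k)))) \<in> borel_measurable borel"
  proof (rule obar_measurable)
    fix k
    have "(\<lambda>x. max 1 (real (dg x (Suc k)))) \<in> borel_measurable borel" by measurable
    then show "(\<lambda>x. real (max 1 (dg x (Suc k)))) \<in> borel_measurable borel"
      by (simp add: of_nat_max del: dg.simps)
  qed simp
  have "{x \<in> irr01. oshift x \<in> E} = ((\<lambda>x. obar (\<lambda>k. max 1 (dg x (Suc k)))) -` E \<inter> space borel) \<inter> irr01"
  proof -
    have "oshift x = obar (\<lambda>k. max 1 (dg x (Suc k)))" if "x \<in> irr01" for x
    proof -
      have "(\<lambda>k. max 1 (dg x (Suc k))) = (\<lambda>k. dg x (Suc k))"
        using dg_ge1[OF that] by (intro ext max_absorb2) blast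
      then show ?thesis using oshift_irr[OF that] by simp
    qed
    then show ?thesis by auto
  qed
  also have "\<dots> \<in> sets borel" using measurable_sets[OF m E] irr01_borel by simp
  finally show ?thesis .
qed

theorem lemma2:
  fixes M :: "'a measure" and \<eta> :: "nat \<Rightarrow> 'a \<Rightarrow> nat" and p :: "nat \<Rightarrow> real"
  assumes "prob_space M"
    and "prob_space.indep_vars M (\<lambda>_. count_space UNIV) \<eta> UNIV"
    and "\<And>k \<omega>. \<omega> \<in> space M \<Longrightarrow> 1 \<le> \<eta> k \<omega>"
    and "\<And>k m. measure M {\<omega> \<in> space M. \<eta> k \<omega> = m} = p m"
  shows "(\<forall>E \<in> sets borel.
            emeasure (distr M borel (\<lambda>\<omega>. obar (\<lambda>k. \<eta> k \<omega>))) {x \<in> irr01. oshift x \<in> E}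
          = emeasure (distr M borel (\<lambda>\<omega>. obar (\<lambda>k. \<eta> k \<omega>))) E)
       \<and> (\<forall>A \<in> sets borel. {x \<in> irr01. oshift x \<in> A} = A \<longrightarrow>
            measure (distr M borel (\<lambda>\<omega>. obar (\<lambda>k. \<eta> k \<omega>))) A = 0 \<or>
            measure (distr M borel (\<lambda>\<omega>. obar (\<lambda>k. \<eta> k \<omega>))) A = 1)"
proof -
  interpret P: prob_space M by fact
  let ?C = "count_space (UNIV::nat set)"
  have rv: "\<And>i. \<eta> i \<in> measurable M ?C" using assms(2) unfolding P.indep_vars_def by auto
  have rrv: "\<And>i. (\<lambda>\<omega>. real (\<eta> i \<omega>)) \<in> borel_measurable M"
    by (rule measurable_compose[OF rv]) simp
  define Xn where "Xn n \<omega> = obar (\<lambda>k. \<eta> (k + n) \<omega>)" for n \<omega>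
  have X0: "(\<lambda>\<omega>. obar (\<lambda>k. \<eta> k \<omega>)) = Xn 0" unfolding Xn_def by simp
  have Xmeas: "Xn n \<in> borel_measurable M" for n
    unfolding Xn_def by (rule obar_measurable) (use assms(3) rrv in auto)
  have pos: "\<forall>k. 1 \<le> \<eta> (k + n) \<omega>" if "\<omega> \<in> space M" for n \<omega> using assms(3)[OF that] by simp
  have Xirr: "Xn n \<omega> \<in> irr01" if "\<omega> \<in> space M" for n \<omega>
    unfolding Xn_def by (rule obar_irr01[OF pos[OF that]])
  have Xsh: "oshift (Xn n \<omega>) = Xn (Suc n) \<omega>" if "\<omega> \<in> space M" for n \<omega>
    unfolding Xn_def oshift_obar[OF pos[OF that]] by simp

  define D where "D = distr M ?C (\<eta> 0)"
  have Deq: "distr M ?C (\<eta> i) = D" for i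
    unfolding D_def
  proof (rule measure_eqI_countable[where A=UNIV])
    fix a :: nat
    have "emeasure (distr M ?C (\<eta> j)) {a} = ennreal (p a)" for j
    proof -
      have "emeasure (distr M ?C (\<eta> j)) {a} = emeasure M (\<eta> j -` {a} \<inter> space M)"
        by (rule emeasure_distr[OF rv]) simp
      also have "\<eta> j -` {a} \<inter> space M = {\<omega> \<in> space M. \<eta> j \<omega> = a}" by auto
      also have "emeasure M {\<omega> \<in> space M. \<eta> j \<omega> = a} = ennreal (measure M {\<omega> \<in> space M. \<eta> j \<omega> = a})"
        by (rule P.emeasure_eq_measure)
      finally show ?thesis using assms(4) by simp
    qed
    then show "emeasure (distr M ?C (\<eta> i)) {a} = emeasure (distr M ?C (\<eta> 0)) {a}" by simp
  qed simp_all
  have probD: "prob_space D" unfolding D_def by (rule P.prob_space_distr[OF rv])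
  let ?PC = "PiM (UNIV::nat set) (\<lambda>_. ?C)"
  let ?PD = "PiM (UNIV::nat set) (\<lambda>_. D)"
  have setsD: "sets D = sets ?C" unfolding D_def by simp
  have setsPD: "sets ?PD = sets ?PC" by (rule sets_PiM_cong) (simp_all add: setsD)
  have PiZ: "distr M ?PC (\<lambda>\<omega>. \<lambda>i\<in>UNIV. \<eta> i \<omega>) = ?PD"
    using P.indep_vars_iff_distr_eq_PiM'[where I="UNIV::nat set" and M'="\<lambda>_. ?C" and X=\<eta>] assms(2) rv Deq by simp
  have Phi_meas: "Phi \<in> borel_measurable ?PC"
  proof -
    have "(\<lambda>g. obar (\<lambda>k. max 1 (g k))) \<in> borel_measurable ?PC"
    proof (rule obar_measurable)
      fix k
      show "(\<lambda>g. real (max 1 (g k))) \<in> borel_measurable ?PC"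
        by (rule measurable_compose[OF measurable_component_singleton]) simp_all
    qed simp
    then show ?thesis unfolding Phi_def .
  qed
  have Phi_meas': "Phi \<in> borel_measurable ?PD"
    using Phi_meas measurable_cong_sets[OF setsPD refl] by blast
  have Zm: "(\<lambda>\<omega>. \<lambda>i\<in>UNIV. \<eta> i \<omega>) \<in> measurable M ?PC"
    by (rule measurable_restrict) (rule rv)
  have shm: "(\<lambda>\<omega>. \<lambda>n\<in>UNIV. \<omega> (Suc n)) \<in> measurable ?PD ?PD"
    by (rule measurable_restrict) (rule measurable_component_singleton, simp)
  have Phi_eq: "Phi (\<lambda>i\<in>UNIV. \<eta> (i + n) \<omega>) = Xn n \<omega>" if "\<omega> \<in> space M" for n \<omega>
  proof -
    have "(\<lambda>k. max 1 ((\<lambda>i\<in>UNIV. \<eta> (i + n) \<omega>) k)) = (\<lambda>k. \<eta> (k + n) \<omega>)"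
      using pos[OF that] by (intro ext) (simp add: max_absorb2)
    then show ?thesis unfolding Phi_def Xn_def by simp
  qed
  have dist0: "distr M borel (Xn 0) = distr ?PD borel Phi"
  proof -
    have "distr M borel (Xn 0) = distr M borel (Phi \<circ> (\<lambda>\<omega>. \<lambda>i\<in>UNIV. \<eta> i \<omega>))"
    proof (rule distr_cong)
      fix \<omega> assume \<omega>: "\<omega> \<in> space M"
      have "(Phi \<circ> (\<lambda>\<omega>. \<lambda>i\<in>UNIV. \<eta> i \<omega>)) \<omega> = Phi (\<lambda>i\<in>UNIV. \<eta> (i + 0) \<omega>)" by simp
      also have "\<dots> = Xn 0 \<omega>" by (rule Phi_eq[OF \<omega>])
      finally show "Xn 0 \<omega> = (Phi \<circ> (\<lambda>\<omega>. \<lambda>i\<in>UNIV. \<eta> i \<omega>)) \<omega>" by (rule sym)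
    qed (rule refl)+
    also have "\<dots> = distr (distr M ?PC (\<lambda>\<omega>. \<lambda>i\<in>UNIV. \<eta> i \<omega>)) borel Phi"
      by (rule distr_distr[symmetric, OF Phi_meas Zm])
    finally show ?thesis unfolding PiZ .
  qed
  have dist1: "distr M borel (Xn 1) = distr ?PD borel Phi"
  proof -
    define Z where "Z = (\<lambda>\<omega>. \<lambda>i\<in>UNIV. \<eta> i \<omega>)"
    define sh where "sh = (\<lambda>(\<omega>::nat \<Rightarrow> nat). \<lambda>n\<in>UNIV. \<omega> (Suc n))"
    have Zm': "Z \<in> measurable M ?PC" unfolding Z_def by (rule Zm)
    have shm': "sh \<in> measurable ?PD ?PD" unfolding sh_def by (rule shm)
    have PiZ': "distr M ?PC Z = ?PD" unfolding Z_def by (rule PiZ)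
    have "distr M borel (Xn 1) = distr M borel ((Phi \<circ> sh) \<circ> Z)"
    proof (rule distr_cong)
      fix \<omega> assume \<omega>: "\<omega> \<in> space M"
      have e: "sh (Z \<omega>) = (\<lambda>i\<in>UNIV. \<eta> (i + 1) \<omega>)"
        unfolding sh_def Z_def by (rule ext) simp
      have "((Phi \<circ> sh) \<circ> Z) \<omega> = Phi (sh (Z \<omega>))" by (simp only: comp_apply)
      also have "\<dots> = Phi (\<lambda>i\<in>UNIV. \<eta> (i + 1) \<omega>)" by (simp only: e)
      also have "\<dots> = Xn 1 \<omega>" by (rule Phi_eq[OF \<omega>])
      finally show "Xn 1 \<omega> = ((Phi \<circ> sh) \<circ> Z) \<omega>" by (rule sym)
    qed (rule refl)+
    also have "\<dots> = distr (distr M ?PC Z) borel (Phi \<circ> sh)"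
    proof (rule distr_distr[symmetric, OF _ Zm'])
      have "sh \<in> measurable ?PC ?PD"
        using shm' measurable_cong_sets[OF setsPD refl] by blast
      then show "Phi \<circ> sh \<in> borel_measurable ?PC"
        using Phi_meas' by (rule measurable_comp)
    qed
    also have "\<dots> = distr (distr ?PD ?PD sh) borel Phi"
      unfolding PiZ' by (rule distr_distr[symmetric, OF Phi_meas' shm'])
    also have "distr ?PD ?PD sh = ?PD"
      unfolding sh_def using distr_PiM_reindex[of UNIV "\<lambda>_. D" Suc UNIV] probD by simp
    finally show ?thesis .
  qed
  have disteq: "distr M borel (Xn 1) = distr M borel (Xn 0)" using dist0 dist1 by simp

  have part1: "\<forall>E \<in> sets borel.
            emeasure (distr M borel (Xn 0)) {x \<in> irr01. oshift x \<in> E}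
          = emeasure (distr M borel (Xn 0)) E"
  proof
    fix E :: "real set" assume E: "E \<in> sets borel"
    have S: "{x \<in> irr01. oshift x \<in> E} \<in> sets borel" by (rule preimage_borel[OF E])
    have "emeasure (distr M borel (Xn 0)) {x \<in> irr01. oshift x \<in> E}
        = emeasure M (Xn 0 -` {x \<in> irr01. oshift x \<in> E} \<inter> space M)"
      by (rule emeasure_distr[OF Xmeas S])
    also have "Xn 0 -` {x \<in> irr01. oshift x \<in> E} \<inter> space M = Xn 1 -` E \<inter> space M"
      using Xirr Xsh by auto
    also have "emeasure M (Xn 1 -` E \<inter> space M) = emeasure (distr M borel (Xn 1)) E"
      by (rule emeasure_distr[symmetric, OF Xmeas E])
    finally show "emeasure (distr M borel (Xn 0)) {x \<in> irr01. oshift x \<in> E}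
          = emeasure (distr M borel (Xn 0)) E" unfolding disteq .
  qed

  have part2: "\<forall>A \<in> sets borel. {x \<in> irr01. oshift x \<in> A} = A \<longrightarrow>
            measure (distr M borel (Xn 0)) A = 0 \<or> measure (distr M borel (Xn 0)) A = 1"
  proof (intro ballI impI)
    fix A :: "real set" assume A: "A \<in> sets borel" and inv: "{x \<in> irr01. oshift x \<in> A} = A"
    have step: "Xn n \<omega> \<in> A \<longleftrightarrow> Xn (Suc n) \<omega> \<in> A" if "\<omega> \<in> space M" for n \<omega>
    proof -
      have "Xn n \<omega> \<in> A \<longleftrightarrow> Xn n \<omega> \<in> {x \<in> irr01. oshift x \<in> A}" using inv by simp
      also have "\<dots> \<longleftrightarrow> Xn (Suc n) \<omega> \<in> A" using Xirr[OF that] Xsh[OF that] by simp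
      finally show ?thesis .
    qed
    have alln: "Xn 0 \<omega> \<in> A \<longleftrightarrow> Xn n \<omega> \<in> A" if "\<omega> \<in> space M" for n \<omega>
      by (induction n) (use step[OF that] in auto)
    define B where "B = Xn 0 -` A \<inter> space M"
    define G where "G i = {\<eta> i -` S \<inter> space M | S. S \<in> sets ?C}" for i
    define Fam where "Fam i = sigma_sets (space M) (G i)" for i
    have Gsub: "G i \<subseteq> Pow (space M)" for i unfolding G_def by auto
    have indep: "P.indep_sets Fam UNIV"
      using assms(2) unfolding P.indep_vars_def Fam_def G_def by simp
    have sa: "sigma_algebra (space M) (Fam i)" for i
      unfolding Fam_def by (rule sigma_algebra_sigma_sets[OF Gsub])
    have FamSub: "Fam i \<subseteq> Pow (space M)" for i
      using sigma_sets_into_sp[OF Gsub] unfolding Fam_def by blast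
    have "B \<in> P.tail_events Fam"
      unfolding P.tail_events_def
    proof
      fix n
      let ?U = "\<Union> (Fam ` {n..})"
      let ?N = "sigma (space M) ?U"
      have Usub: "?U \<subseteq> Pow (space M)" using FamSub by blast
      have spN: "space ?N = space M" by (simp add: space_measure_of_conv)
      have setsN: "sets ?N = sigma_sets (space M) ?U" by (rule sets_measure_of[OF Usub])
      have comp: "(\<lambda>\<omega>. real (\<eta> (k + n) \<omega>)) \<in> borel_measurable ?N" for k
      proof (rule measurableI)
        fix S :: "real set" assume "S \<in> sets borel"
        have "(\<lambda>\<omega>. real (\<eta> (k + n) \<omega>)) -` S \<inter> space ?N = \<eta> (k + n) -` (real -` S) \<inter> space M"
          unfolding spN by auto
        also have "\<dots> \<in> G (k + n)" unfolding G_def by auto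
        also have "G (k + n) \<subseteq> Fam (k + n)" unfolding Fam_def by auto
        also have "Fam (k + n) \<subseteq> ?U" by (intro UN_upper) simp
        also have "?U \<subseteq> sets ?N" unfolding setsN by auto
        finally show "(\<lambda>\<omega>. real (\<eta> (k + n) \<omega>)) -` S \<inter> space ?N \<in> sets ?N" .
      qed simp
      have "Xn n \<in> borel_measurable ?N"
        unfolding Xn_def by (rule obar_measurable) (use assms(3) comp spN in auto)
      then have "Xn n -` A \<inter> space ?N \<in> sets ?N" by (rule measurable_sets[OF _ A])
      moreover have "Xn n -` A \<inter> space ?N = B" unfolding spN B_def using alln by auto
      ultimately show "B \<in> sigma_sets (space M) ?U" unfolding setsN by simp
    qed
    then have "P.prob B = 0 \<or> P.prob B = 1" by (rule P.kolmogorov_0_1_law[OF sa indep])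
    moreover have "measure (distr M borel (Xn 0)) A = P.prob B"
      unfolding B_def by (rule measure_distr[OF Xmeas A])
    ultimately show "measure (distr M borel (Xn 0)) A = 0 \<or> measure (distr M borel (Xn 0)) A = 1"
      by simp
  qed
  show ?thesis unfolding X0 using part1 part2 by blast
qed

end
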